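(* Let $E=\{x:\langle Ax,x\rangle=1\}$, $A=\operatorname{diag}(1/a_1^2,1/a_2^2)$, and let $P=(p_1,\dots,p_n)$ be an $n$-periodic billiard trajectory in $E$ with angles $\alpha_1,\dots,\alpha_n$, perimeter $L$, and $J=-\langle u_1,Ap_1\rangle$ where $u_1=(p_2-p_1)/|p_2-p_1|$. Then \[\sum_{i=1}^n\cos\alpha_i=JL-n.\]
   Context: An $n$-periodic billiard trajectory in $E$ is a closed polygon $(p_1,\dots,p_n)$ (indices mod $n$) with all $p_i\in E$ obeying the law of reflection at every vertex. The angle $\alpha_i$ is the angle at $p_i$ between the segments $p_ip_{i-1}$ and $p_ip_{i+1}$. *)

theory Defs
  imports "HOL-Analysis.Analysis"
begin

definition diagA :: "real \<Rightarrow> real \<Rightarrow> real \<times> real \<Rightarrow> real \<times> real" where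
  "diagA a1 a2 x = (fst x / a1^2, snd x / a2^2)"

definition ellipse :: "real \<Rightarrow> real \<Rightarrow> (real \<times> real) set" where
  "ellipse a1 a2 = {x. inner (diagA a1 a2 x) x = 1}"

definition vec_angle :: "real \<times> real \<Rightarrow> real \<times> real \<Rightarrow> real" where
  "vec_angle u v = arccos (inner u v / (norm u * norm v))"

definition unit_dir :: "real \<times> real \<Rightarrow> real \<times> real \<Rightarrow> real \<times> real" where
  "unit_dir p q = (1 / norm (q - p)) *\<^sub>R (q - p)"

text \<open>n-periodic billiard trajectory, vertices p i (i :: nat), indices taken mod n
  (encoded by n-periodicity of p). Law of reflection at p i: the outgoing unit
  direction is the mirror image of the incoming one in the tangent line,
  i.e. u_i = u_(i-1) - 2 <u_(i-1), nu> nu with nu the unit normal (A p_i normalised).\<close>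
definition billiard_traj :: "real \<Rightarrow> real \<Rightarrow> nat \<Rightarrow> (nat \<Rightarrow> real \<times> real) \<Rightarrow> bool" where
  "billiard_traj a1 a2 n p \<longleftrightarrow>
     (\<forall>i. p (i + n) = p i) \<and>
     (\<forall>i. p i \<in> ellipse a1 a2) \<and>
     (\<forall>i. p (Suc i) \<noteq> p i) \<and>
     (\<forall>i. let nu = (1 / norm (diagA a1 a2 (p (Suc i)))) *\<^sub>R diagA a1 a2 (p (Suc i));
              uin = unit_dir (p i) (p (Suc i));
              uout = unit_dir (p (Suc i)) (p (Suc (Suc i)))
          in uout = uin - (2 * inner uin nu) *\<^sub>R nu)"

end

theory Submission
  imports Defs
begin

lemma diagA_sym: "inner (diagA a1 a2 x) y = inner x (diagA a1 a2 y)"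
  by (cases x; cases y) (simp add: diagA_def)

lemma ell_one: "x \<in> ellipse a1 a2 \<Longrightarrow> inner x (diagA a1 a2 x) = 1"
  by (simp add: ellipse_def inner_commute)

lemma diagA_nz: "x \<in> ellipse a1 a2 \<Longrightarrow> diagA a1 a2 x \<noteq> 0"
  by (auto simp: ellipse_def)

lemma norm_unit_dir: "p \<noteq> q \<Longrightarrow> norm (unit_dir p q) = 1"
  by (simp add: unit_dir_def)

lemma unit_dir_mult: "p \<noteq> q \<Longrightarrow> q - p = norm (q - p) *\<^sub>R unit_dir p q"
  by (simp add: unit_dir_def)

lemma chord:
  assumes "p \<in> ellipse a1 a2" "q \<in> ellipse a1 a2"
  shows "inner (q - p) (diagA a1 a2 q) = - inner (q - p) (diagA a1 a2 p)"
proof -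
  have "inner q (diagA a1 a2 q) = 1" "inner p (diagA a1 a2 p) = 1"
    using assms ell_one by auto
  moreover have "inner p (diagA a1 a2 q) = inner q (diagA a1 a2 p)"
    by (metis diagA_sym inner_commute)
  ultimately show ?thesis by (simp add: inner_diff_left)
qed

lemma chord_u:
  assumes "p \<in> ellipse a1 a2" "q \<in> ellipse a1 a2"
  shows "inner (unit_dir p q) (diagA a1 a2 q) = - inner (unit_dir p q) (diagA a1 a2 p)"
  using chord[OF assms] by (simp add: unit_dir_def)

lemma refl_facts:
  fixes a uin uout nu x :: "real \<times> real"
  assumes "a \<noteq> 0" "norm uin = 1" "uout = uin - (2 * inner uin nu) *\<^sub>R nu"
    "nu = (1/norm a) *\<^sub>R a"
  shows "inner uout a = - inner uin a"
    and "inner uin uout = 1 - 2 * (inner uin nu)^2"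
    and "inner x (uin - uout) = 2 * inner uin nu * inner x nu"
    and "inner uin nu * norm a = inner uin a"
    and "inner x nu * norm a = inner x a"
proof -
  have na: "norm a > 0" using assms(1) by simp
  have nn: "inner nu nu = 1" using assms(4) na
    by (simp add: power2_norm_eq_inner[symmetric] power2_eq_square)
  have uu: "inner uin uin = 1" using assms(2)
    by (simp add: power2_norm_eq_inner[symmetric])
  have nua: "inner nu a = norm a" using assms(4) na
    by (simp add: power2_norm_eq_inner[symmetric] power2_eq_square)
  show "inner x nu * norm a = inner x a" using assms(4) na by simp
  show un: "inner uin nu * norm a = inner uin a" using assms(4) na by simp
  have "inner uout a = inner uin a - 2 * inner uin nu * inner nu a"
    using assms(3) by (simp add: inner_diff_left)
  then show "inner uout a = - inner uin a" using nua un by simp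
  show "inner uin uout = 1 - 2 * (inner uin nu)^2"
    using assms(3) uu by (simp add: inner_diff_right power2_eq_square)
  show "inner x (uin - uout) = 2 * inner uin nu * inner x nu"
    using assms(3) by simp
qed

lemma tele: "(\<Sum>i=1..(n::nat). f (i-1)) = (\<Sum>i=1..n. f i) + f 0 - (f n::real)"
  by (induction n) auto

theorem theorem2p4:
  fixes a1 a2 :: real and n :: nat and p :: "nat \<Rightarrow> real \<times> real"
  assumes "a1 > 0" and "a2 > 0" and "n \<ge> 2"
    and "billiard_traj a1 a2 n p"
  shows "(\<Sum>i=1..n. cos (vec_angle (p (i - 1) - p i) (p (i + 1) - p i)))
         = (- inner (unit_dir (p 1) (p 2)) (diagA a1 a2 (p 1)))
             * (\<Sum>i=1..n. norm (p (i + 1) - p i)) - real n"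
proof -
  define A where "A = diagA a1 a2"
  define u where "u = (\<lambda>i. unit_dir (p i) (p (Suc i)))"
  define L where "L = (\<lambda>i. norm (p (Suc i) - p i))"
  define J where "J = (\<lambda>i. - inner (u i) (A (p i)))"
  define g where "g = (\<lambda>i. inner (p i) (u i))"
  have per: "\<And>i. p (i + n) = p i" and ell: "\<And>i. p i \<in> ellipse a1 a2"
    and dist: "\<And>i. p (Suc i) \<noteq> p i"
    using assms(4) by (auto simp: billiard_traj_def)
  have rfl: "\<And>i. u (Suc i) = u i - (2 * inner (u i) ((1 / norm (A (p (Suc i)))) *\<^sub>R A (p (Suc i))))
       *\<^sub>R ((1 / norm (A (p (Suc i)))) *\<^sub>R A (p (Suc i)))"
    using assms(4) unfolding billiard_traj_def u_def A_def Let_def by auto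
  have nu1: "\<And>i. norm (u i) = 1" using dist norm_unit_dir unfolding u_def by metis
  have uL: "\<And>i. p (Suc i) - p i = L i *\<^sub>R u i"
    using dist unit_dir_mult unfolding u_def L_def by metis
  have Lpos: "\<And>i. L i > 0" using dist unfolding L_def by simp
  have Anz: "\<And>i. A (p i) \<noteq> 0" using ell diagA_nz unfolding A_def by metis
  have ch: "\<And>i. inner (u i) (A (p (Suc i))) = J i"
    using chord_u[OF ell ell] unfolding J_def u_def A_def by metis
  have Jstep: "\<And>i. J (Suc i) = J i"
  proof -
    fix i
    have "inner (u (Suc i)) (A (p (Suc i))) = - inner (u i) (A (p (Suc i)))"
      by (rule refl_facts(1)[OF Anz nu1 rfl[of i] refl]) 
    then show "J (Suc i) = J i" using ch[of i] unfolding J_def by simp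
  qed
  have Jc: "\<And>i. J i = J 0"
  proof -
    fix i show "J i = J 0" by (induction i) (simp_all add: Jstep)
  qed
  have vert: "\<And>k. cos (vec_angle (p k - p (Suc k)) (p (Suc k + 1) - p (Suc k)))
      = J 0 * (L k + g k - g (Suc k)) - 1"
  proof -
    fix k
    define a where "a = A (p (Suc k))"
    define nu where "nu = (1 / norm a) *\<^sub>R a"
    define s where "s = inner (u k) nu"
    have r: "u (Suc k) = u k - (2 * inner (u k) nu) *\<^sub>R nu"
      using rfl[of k] unfolding nu_def a_def .
    have f2: "inner (u k) (u (Suc k)) = 1 - 2 * s^2"
      using refl_facts(2)[OF Anz[of "Suc k"] nu1 r] unfolding s_def nu_def a_def by simp
    have f3: "inner (p (Suc k)) (u k - u (Suc k)) = 2 * s * inner (p (Suc k)) nu"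
      using refl_facts(3)[OF Anz[of "Suc k"] nu1 r] unfolding s_def nu_def a_def by simp
    have f4: "s * norm a = J 0"
      using refl_facts(4)[OF Anz[of "Suc k"] nu1 r] ch[of k] Jc[of k] unfolding s_def nu_def a_def by simp
    have f5: "inner (p (Suc k)) nu * norm a = 1"
      using refl_facts(5)[OF Anz[of "Suc k"] nu1 r] ell_one[OF ell[of "Suc k"]] Anz[of "Suc k"]
      unfolding nu_def a_def A_def by simp
    have na: "norm a > 0" using Anz unfolding a_def by simp
    have cosv: "cos (vec_angle (p k - p (Suc k)) (p (Suc k + 1) - p (Suc k))) = - inner (u k) (u (Suc k))"
    proof -
      have x: "p k - p (Suc k) = - (L k *\<^sub>R u k)" using uL[of k] by (simp add: algebra_simps)
      have y: "p (Suc k + 1) - p (Suc k) = L (Suc k) *\<^sub>R u (Suc k)" using uL[of "Suc k"] by simp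
      have q: "inner (p k - p (Suc k)) (p (Suc k + 1) - p (Suc k)) / (norm (p k - p (Suc k)) * norm (p (Suc k + 1) - p (Suc k)))
          = - inner (u k) (u (Suc k))"
        unfolding x y using Lpos[of k] Lpos[of "Suc k"] nu1 by simp
      have b: "\<bar>inner (u k) (u (Suc k))\<bar> \<le> 1"
        using Cauchy_Schwarz_ineq2[of "u k" "u (Suc k)"] nu1 by simp
      show ?thesis unfolding vec_angle_def q
        by (rule cos_arccos) (use b in auto)
    qed
    have gL: "inner (p (Suc k)) (u k) = L k + g k"
    proof -
      have "inner (p (Suc k) - p k) (u k) = L k"
        unfolding uL using nu1[of k] by (simp add: power2_norm_eq_inner[symmetric])
      then show ?thesis unfolding g_def by (simp add: inner_diff_left)
    qed
    have "J 0 * (L k + g k - g (Suc k)) = J 0 * inner (p (Suc k)) (u k - u (Suc k))"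
      using gL unfolding g_def by (simp add: inner_diff_right)
    also have "\<dots> = 2 * s * (J 0 * inner (p (Suc k)) nu)" using f3 by simp
    also have "J 0 * inner (p (Suc k)) nu = s"
      using f4 f5 na by (metis mult.assoc mult.commute mult_cancel_right1 norm_zero order_less_irrefl)
    finally have "J 0 * (L k + g k - g (Suc k)) = 2 * s^2" by (simp add: power2_eq_square)
    then show "cos (vec_angle (p k - p (Suc k)) (p (Suc k + 1) - p (Suc k)))
      = J 0 * (L k + g k - g (Suc k)) - 1" using cosv f2 by simp
  qed
  have "(\<Sum>i=1..n. cos (vec_angle (p (i - 1) - p i) (p (i + 1) - p i)))
      = (\<Sum>i=1..n. J 0 * (L (i-1) + g (i-1) - g i) - 1)"
  proof (rule sum.cong)
    fix i assume "i \<in> {1..n}"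
    then obtain k where i: "i = Suc k" by (cases i) auto
    show "cos (vec_angle (p (i - 1) - p i) (p (i + 1) - p i)) = J 0 * (L (i-1) + g (i-1) - g i) - 1"
      using vert[of k] unfolding i by simp
  qed simp
  also have "\<dots> = J 0 * ((\<Sum>i=1..n. L (i-1)) + (\<Sum>i=1..n. g (i-1)) - (\<Sum>i=1..n. g i)) - real n"
    by (simp add: sum_subtractf sum.distrib sum_distrib_left algebra_simps)
  also have "\<dots> = J 0 * (\<Sum>i=1..n. L i) - real n"
  proof -
    have pn: "p n = p 0" using per[of 0] by simp
    have pn1: "p (Suc n) = p 1" using per[of 1] by simp
    have "L n = L 0" "g n = g 0" unfolding L_def g_def u_def using pn pn1 by simp_all
    then show ?thesis using tele[of L n] tele[of g n] by simp
  qed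
  also have "J 0 = - inner (unit_dir (p 1) (p 2)) (diagA a1 a2 (p 1))"
    using Jc[of 1] unfolding J_def u_def A_def by (simp add: numeral_2_eq_2)
  finally show ?thesis unfolding L_def by simp
qed

end
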